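(* For every one-red TAP instance, the set of exemplars output by GREEDY has margin at least $\tfrac12$ times the maximum margin of the instance; that is, GREEDY is a $\tfrac12$-approximation for one-red TAP. Consequently GREEDY is a $\tfrac12$-approximation for $2$-weight TAP (instances in which every exemplar contains at most two features and, by the standing preprocessing, at least one red and at least one blue feature).
   Context: Target Approximation Problem (TAP): the input is a groundset $U$ of features, a target $T\subseteq U$, and a collection $S$ of exemplars, each a subset of $U$. Features in $U\cap T$ are blue, features in $U\setminus T$ are red. A feature appears in $S'\subseteq S$ if it lies in $\bigcup_{E\in S'}E$. The margin of $S'$ is (number of blue features appearing in $S'$) minus (number of red features appearing in $S'$); TAP asks for $S'$ of maximum margin. It is assumed that every feature appears in at least one exemplar and that $T$ and all exemplars are nonempty. Standing preprocessing: exemplars with no red feature are always taken and removed together with their features, and exemplars with no blue feature are deleted, so every exemplar contains at least one red and at least one blue feature. An instance is one-red if every exemplar contains exactly one red feature. A red feature $r$ covers a blue feature $b$ if some exemplar contains both. GREEDY: until every blue feature is covered, repeatedly choose the red feature that covers the largest number of not-yet-covered blue features (ties broken arbitrarily); the output is the set of all exemplars containing a chosen red feature. *)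

theory Defs
  imports Complex_Main
begin

text \<open>A TAP instance: groundset U, target T, collection S of exemplars.  We consider instances after the
  standing preprocessing: every exemplar contains at least one red and at least
  one blue feature.\<close>

definition tap_instance :: "'a set \<Rightarrow> 'a set \<Rightarrow> 'a set set \<Rightarrow> bool" where
  "tap_instance U T S \<longleftrightarrow>
     finite U \<and> T \<subseteq> U \<and> T \<noteq> {} \<and>
     (\<forall>E\<in>S. E \<noteq> {} \<and> E \<subseteq> U) \<and>
     \<Union>S = U \<and>
     (\<forall>E\<in>S. E \<inter> T \<noteq> {} \<and> E - T \<noteq> {})"

definition blue :: "'a set \<Rightarrow> 'a set \<Rightarrow> 'a set" where
  "blue U T = U \<inter> T"

definition red :: "'a set \<Rightarrow> 'a set \<Rightarrow> 'a set" where
  "red U T = U - T"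

definition margin :: "'a set \<Rightarrow> 'a set \<Rightarrow> 'a set set \<Rightarrow> int" where
  "margin U T S' = int (card (blue U T \<inter> \<Union>S')) - int (card (red U T \<inter> \<Union>S'))"

definition max_margin :: "'a set \<Rightarrow> 'a set \<Rightarrow> 'a set set \<Rightarrow> int" where
  "max_margin U T S = Max (margin U T ` Pow S)"

definition one_red :: "'a set \<Rightarrow> 'a set \<Rightarrow> 'a set set \<Rightarrow> bool" where
  "one_red U T S \<longleftrightarrow> (\<forall>E\<in>S. card (red U T \<inter> E) = 1)"

definition two_weight :: "'a set set \<Rightarrow> bool" where
  "two_weight S \<longleftrightarrow> (\<forall>E\<in>S. card E \<le> 2)"

definition covers :: "'a set set \<Rightarrow> 'a \<Rightarrow> 'a \<Rightarrow> bool" where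
  "covers S r b \<longleftrightarrow> (\<exists>E\<in>S. r \<in> E \<and> b \<in> E)"

definition covered :: "'a set set \<Rightarrow> 'a list \<Rightarrow> 'a set" where
  "covered S rs = {b. \<exists>r\<in>set rs. covers S r b}"

definition gain :: "'a set \<Rightarrow> 'a set \<Rightarrow> 'a set set \<Rightarrow> 'a set \<Rightarrow> 'a \<Rightarrow> nat" where
  "gain U T S C r = card {b \<in> blue U T. b \<notin> C \<and> covers S r b}"

text \<open>A (complete) run of GREEDY, with arbitrary tie breaking: the list of chosen red
  features in order.\<close>
definition greedy_run :: "'a set \<Rightarrow> 'a set \<Rightarrow> 'a set set \<Rightarrow> 'a list \<Rightarrow> bool" where
  "greedy_run U T S rs \<longleftrightarrow>
     (\<forall>i < length rs.
        \<not> (blue U T \<subseteq> covered S (take i rs)) \<and>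
        rs ! i \<in> red U T \<and>
        (\<forall>r \<in> red U T. gain U T S (covered S (take i rs)) r
                          \<le> gain U T S (covered S (take i rs)) (rs ! i))) \<and>
     blue U T \<subseteq> covered S rs"

definition greedy_output :: "'a set set \<Rightarrow> 'a list \<Rightarrow> 'a set set" where
  "greedy_output S rs = {E \<in> S. \<exists>r \<in> set rs. r \<in> E}"

end

theory Submission
  imports Defs
begin

lemma covered_snoc: "covered S (xs @ [r]) = covered S xs \<union> {b. covers S r b}"
  by (auto simp: covered_def)

lemma card_step:
  assumes "finite (blue U T)"
  shows "card (blue U T \<inter> (C \<union> {b. covers S r b})) = card (blue U T \<inter> C) + gain U T S C r"
proof -
  have e: "blue U T \<inter> (C \<union> {b. covers S r b}) = (blue U T \<inter> C) \<union> {b \<in> blue U T. b \<notin> C \<and> covers S r b}"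
    by auto
  show ?thesis unfolding e gain_def
    by (rule card_Un_disjoint) (use assms in auto)
qed

lemma one_red_main:
  assumes tap: "tap_instance U T S" and onr: "one_red U T S" and gr: "greedy_run U T S rs"
    and sub: "S' \<subseteq> S"
  shows "margin U T S' \<le> 2 * margin U T (greedy_output S rs)"
proof -
  define B where "B = blue U T"
  define Rd where "Rd = red U T"
  define k where "k = length rs"
  define C where "C i = covered S (take i rs)" for i
  define g where "g i = gain U T S (C i) (rs ! i)" for i
  have finU: "finite U" and TU: "T \<subseteq> U" and SU: "\<Union>S = U"
    and ES: "\<And>E. E \<in> S \<Longrightarrow> E \<inter> T \<noteq> {} \<and> E - T \<noteq> {}"
    and EU: "\<And>E. E \<in> S \<Longrightarrow> E \<subseteq> U"
    using tap unfolding tap_instance_def by auto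
  have finB: "finite B" using finU unfolding B_def blue_def by auto
  have finR: "finite Rd" using finU unfolding Rd_def red_def by auto
  have grk: "\<And>i. i < k \<Longrightarrow> \<not> (B \<subseteq> C i) \<and> rs ! i \<in> Rd \<and>
        (\<forall>r \<in> Rd. gain U T S (C i) r \<le> g i)"
    using gr unfolding greedy_run_def B_def Rd_def C_def g_def k_def by auto
  have allcov: "B \<subseteq> C k" using gr unfolding greedy_run_def B_def C_def k_def by auto
  have cardC: "i \<le> k \<Longrightarrow> card (B \<inter> C i) = (\<Sum>l<i. g l)" for i
  proof (induction i)
    case 0
    then show ?case by (simp add: C_def covered_def)
  next
    case (Suc i)
    then have ik: "i < k" by simp
    have "C (Suc i) = C i \<union> {b. covers S (rs ! i) b}"
      unfolding C_def using ik k_def by (simp add: take_Suc_conv_app_nth covered_snoc)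
    then have "card (B \<inter> C (Suc i)) = card (B \<inter> C i) + g i"
      using card_step[of U T "C i" S "rs ! i"] finB unfolding B_def g_def by simp
    then show ?case using Suc by simp
  qed
  have g1: "g i \<ge> 1" if ik: "i < k" for i
  proof -
    obtain b where b: "b \<in> B" "b \<notin> C i" using grk[OF ik] by auto
    then have "b \<in> U" unfolding B_def blue_def by auto
    then obtain E where E: "E \<in> S" "b \<in> E" using SU by auto
    then obtain r where r: "r \<in> E" "r \<notin> T" using ES by auto
    have rR: "r \<in> Rd" using r E EU unfolding Rd_def red_def by auto
    have cv: "covers S r b" using E r unfolding covers_def by auto
    have "b \<in> {b \<in> blue U T. b \<notin> C i \<and> covers S r b}" using b cv B_def by auto
    moreover have "finite {b \<in> blue U T. b \<notin> C i \<and> covers S r b}" using finB B_def by auto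
    ultimately have "card {b \<in> blue U T. b \<notin> C i \<and> covers S r b} > 0"
      using card_gt_0_iff by blast
    then have "gain U T S (C i) r \<ge> 1" unfolding gain_def by simp
    then show ?thesis using grk[OF ik] rR by fastforce
  qed
  define GO where "GO = greedy_output S rs"
  have B_GO: "B \<inter> \<Union>GO = B"
  proof -
    have "B \<subseteq> \<Union>GO"
    proof
      fix b assume "b \<in> B"
      then have "b \<in> covered S rs" using allcov unfolding C_def k_def by auto
      then obtain r E where "r \<in> set rs" "E \<in> S" "r \<in> E" "b \<in> E"
        unfolding covered_def covers_def by auto
      then show "b \<in> \<Union>GO" unfolding GO_def greedy_output_def by auto
    qed
    then show ?thesis by auto
  qed
  have R_GO: "Rd \<inter> \<Union>GO \<subseteq> set rs"
  proof
    fix x assume x: "x \<in> Rd \<inter> \<Union>GO"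
    then obtain E r where E: "E \<in> S" "x \<in> E" "r \<in> set rs" "r \<in> E"
      unfolding GO_def greedy_output_def by auto
    have "r \<in> Rd" using E(3) grk unfolding k_def by (metis in_set_conv_nth)
    have c1: "card (Rd \<inter> E) = 1" using onr E(1) unfolding one_red_def Rd_def by auto
    have "x \<in> Rd \<inter> E" "r \<in> Rd \<inter> E" using x E \<open>r \<in> Rd\<close> by auto
    then have "x = r" using c1 by (metis card_1_singletonE singletonD)
    then show "x \<in> set rs" using E by simp
  qed
  have "card (Rd \<inter> \<Union>GO) \<le> k"
    using card_mono[OF _ R_GO] card_length[of rs] k_def by fastforce
  then have mGO: "margin U T GO \<ge> int (card B) - int k"
    unfolding margin_def using B_GO B_def Rd_def by simp
  have cB: "card B = (\<Sum>l<k. g l)" using cardC[of k] allcov by (simp add: Int_absorb2)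
  have mGO2: "margin U T GO \<ge> (\<Sum>l<k. int (g l) - 1)"
    using mGO cB by (simp add: sum_subtractf of_nat_sum)
  obtain j where j: "j \<le> k" "\<And>l. l < j \<Longrightarrow> g l \<ge> 2"
    "\<And>r. r \<in> Rd \<Longrightarrow> gain U T S (C j) r \<le> 1"
  proof (cases "\<exists>i. i < k \<and> g i \<le> 1")
    case True
    define j where "j = (LEAST i. i < k \<and> g i \<le> 1)"
    have jp: "j < k \<and> g j \<le> 1" using LeastI_ex[OF True] unfolding j_def .
    have "\<And>l. l < j \<Longrightarrow> g l \<ge> 2"
    proof -
      fix l assume "l < j"
      then have "\<not> (l < k \<and> g l \<le> 1)" using not_less_Least j_def by blast
      then show "g l \<ge> 2" using \<open>l < j\<close> jp by auto
    qed
    moreover have "\<And>r. r \<in> Rd \<Longrightarrow> gain U T S (C j) r \<le> 1"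
      using grk jp by fastforce
    ultimately show ?thesis using jp by (intro that[of j]) auto
  next
    case False
    have "\<And>r. gain U T S (C k) r \<le> 1"
    proof -
      fix r
      have "{b \<in> blue U T. b \<notin> C k \<and> covers S r b} = {}" using allcov B_def by auto
      then show "gain U T S (C k) r \<le> 1" unfolding gain_def by (simp only: card.empty)
    qed
    moreover have "\<And>l. l < k \<Longrightarrow> g l \<ge> 2" using False by fastforce
    ultimately show ?thesis using that by auto
  qed
  define N where "N = B \<inter> \<Union>S'"
  define R where "R = Rd \<inter> \<Union>S'"
  have finR': "finite R" using finR R_def by auto
  have "N - C j \<subseteq> (\<Union>r\<in>R. {b \<in> blue U T. b \<notin> C j \<and> covers S r b})"
  proof
    fix b assume b: "b \<in> N - C j"
    then obtain E where E: "E \<in> S'" "b \<in> E" unfolding N_def by auto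
    then obtain r where r: "r \<in> E" "r \<notin> T" using ES sub by blast
    have "r \<in> R" using r E EU sub unfolding R_def Rd_def red_def by blast
    moreover have "covers S r b" using E r sub unfolding covers_def by auto
    ultimately show "b \<in> (\<Union>r\<in>R. {b \<in> blue U T. b \<notin> C j \<and> covers S r b})"
      using b unfolding N_def B_def by auto
  qed
  then have "card (N - C j) \<le> card (\<Union>r\<in>R. {b \<in> blue U T. b \<notin> C j \<and> covers S r b})"
    by (rule card_mono[rotated]) (use finR' finB B_def in auto)
  also have "\<dots> \<le> (\<Sum>r\<in>R. gain U T S (C j) r)"
    unfolding gain_def by (rule card_UN_le[OF finR'])
  also have "\<dots> \<le> (\<Sum>r\<in>R. 1)"
    by (rule sum_mono) (use j(3) R_def in auto)
  finally have c1: "card (N - C j) \<le> card R" by simp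
  have Nd: "N = (N \<inter> C j) \<union> (N - C j)" by auto
  have "card N = card ((N \<inter> C j) \<union> (N - C j))" by (rule arg_cong[where f=card, OF Nd])
  also have "\<dots> \<le> card (N \<inter> C j) + card (N - C j)" by (rule card_Un_le)
  also have "card (N \<inter> C j) \<le> card (B \<inter> C j)"
    by (rule card_mono) (use finB N_def in auto)
  finally have "card N \<le> (\<Sum>l<j. g l) + card R" using c1 cardC[OF j(1)] by simp
  then have "margin U T S' \<le> (\<Sum>l<j. int (g l))"
  proof -
    have "int (card N) \<le> int (\<Sum>l<j. g l) + int (card R)" using \<open>card N \<le> (\<Sum>l<j. g l) + card R\<close> by linarith
    then show ?thesis unfolding margin_def N_def R_def B_def Rd_def by (simp add: of_nat_sum)
  qed
  also have "\<dots> \<le> (\<Sum>l<j. 2 * (int (g l) - 1))"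
    by (rule sum_mono) (use j(2) in fastforce)
  also have "\<dots> = 2 * (\<Sum>l<j. int (g l) - 1)" by (simp add: sum_distrib_left)
  also have "\<dots> \<le> 2 * (\<Sum>l<k. int (g l) - 1)"
  proof -
    have "(\<Sum>l<j. int (g l) - 1) \<le> (\<Sum>l<k. int (g l) - 1)"
      by (rule sum_mono2) (use j(1) g1 in force)+
    then show ?thesis by simp
  qed
  also have "\<dots> \<le> 2 * margin U T GO" using mGO2 by simp
  finally show ?thesis unfolding GO_def .
qed

lemma two_weight_one_red:
  assumes tap: "tap_instance U T S" and tw: "two_weight S"
  shows "one_red U T S"
  unfolding one_red_def
proof
  fix E assume E: "E \<in> S"
  have finE: "finite E" using tap E unfolding tap_instance_def by (meson finite_subset)
  have ne1: "E \<inter> T \<noteq> {}" and ne2: "E - T \<noteq> {}" using tap E unfolding tap_instance_def by auto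
  have EU: "E \<subseteq> U" using tap E unfolding tap_instance_def by auto
  have Ed: "E = (E \<inter> T) \<union> (E - T)" by auto
  have "card E = card ((E \<inter> T) \<union> (E - T))" by (rule arg_cong[where f=card, OF Ed])
  also have "\<dots> = card (E \<inter> T) + card (E - T)"
    by (rule card_Un_disjoint) (use finE in auto)
  finally have "card E = card (E \<inter> T) + card (E - T)" .
  moreover have "card (E \<inter> T) \<ge> 1" "card (E - T) \<ge> 1" using ne1 ne2 finE
    by (simp_all add: Suc_leI card_gt_0_iff)
  moreover have "card E \<le> 2" using tw E unfolding two_weight_def by auto
  ultimately have "card (E - T) = 1" by linarith
  moreover have "red U T \<inter> E = E - T" using EU unfolding red_def by auto
  ultimately show "card (red U T \<inter> E) = 1" by simp
qed

lemma main_real: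
  assumes tap: "tap_instance U T S" and onr: "one_red U T S" and gr: "greedy_run U T S rs"
  shows "real_of_int (margin U T (greedy_output S rs)) \<ge> 1/2 * real_of_int (max_margin U T S)"
proof -
  have finU: "finite U" using tap unfolding tap_instance_def by auto
  have "S \<subseteq> Pow U" using tap unfolding tap_instance_def by auto
  then have finS: "finite S" using finU by (meson finite_Pow_iff finite_subset)
  have "max_margin U T S \<in> margin U T ` Pow S" unfolding max_margin_def
    by (rule Max_in) (use finS in auto)
  then obtain S' where "S' \<subseteq> S" "max_margin U T S = margin U T S'" by auto
  then have "max_margin U T S \<le> 2 * margin U T (greedy_output S rs)"
    using one_red_main[OF tap onr gr] by simp
  then show ?thesis by linarith
qed

theorem theorem13:
  fixes U T :: "'a set" and S :: "'a set set"
  assumes "tap_instance U T S"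
  shows "(one_red U T S \<longrightarrow>
            (\<forall>rs. greedy_run U T S rs \<longrightarrow>
               real_of_int (margin U T (greedy_output S rs))
                 \<ge> 1/2 * real_of_int (max_margin U T S)))
       \<and> (two_weight S \<longrightarrow>
            (\<forall>rs. greedy_run U T S rs \<longrightarrow>
               real_of_int (margin U T (greedy_output S rs))
                 \<ge> 1/2 * real_of_int (max_margin U T S)))"
  using main_real[OF assms] two_weight_one_red[OF assms] by blast

end
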